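(* For fixed $x,z\in\mathbb{R}$, $$\lim_{n\to+\infty}n(2\ln n)^{-1/2}D_n\big((1+z/\ln n)G_n(x)/2\big)=e^{c_0-x-2z},$$ where $G_n(x)=\dfrac{8x-5\ln(2\ln n)}{2n(2\ln n)^{1/2}}+\dfrac{(32\ln n)^{1/2}}{n}$.
   Context: For $\alpha\in(0,\pi)$ let $D_n(\alpha)=\det_{1\le j,l\le n}\left(\frac{1}{2\pi}\int_\alpha^{2\pi-\alpha}e^{i(j-l)\theta}\,d\theta\right)$ (the probability that a Haar unitary $n\times n$ matrix has no eigenvalue on a given arc of length $2\alpha$). By a result of Deift–Its–Krasovsky–Zhou there are constants $c_0\in\mathbb{R}$ and $s_0>0$ such that for every $\varepsilon>0$, uniformly in $s_0/n<\alpha<\pi-\varepsilon$, $$\ln D_n(\alpha)=n^2\ln\cos\frac{\alpha}{2}-\frac14\ln\Big(n\sin\frac{\alpha}{2}\Big)+c_0+O\Big(\frac{1}{n\sin(\alpha/2)}\Big).$$ $c_0$ denotes this constant. *)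

theory Defs
  imports "HOL-Analysis.Analysis" "Jordan_Normal_Form.Determinant"
begin

definition arc_toeplitz :: "nat \<Rightarrow> real \<Rightarrow> complex mat" where
  "arc_toeplitz n \<alpha> = mat n n (\<lambda>(j, l).
      complex_of_real (1 / (2 * pi)) *
      integral {\<alpha> .. 2 * pi - \<alpha>}
        (\<lambda>\<theta>. exp (\<i> * complex_of_real (real_of_int (int j - int l) * \<theta>))))"

text \<open>D_n(alpha): the determinant (a Hermitian matrix, so the determinant is real).\<close>
definition D :: "nat \<Rightarrow> real \<Rightarrow> real" where
  "D n \<alpha> = Re (det (arc_toeplitz n \<alpha>))"

definition G :: "nat \<Rightarrow> real \<Rightarrow> real" where
  "G n x = (8 * x - 5 * ln (2 * ln (real n))) / (2 * real n * sqrt (2 * ln (real n)))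
           + sqrt (32 * ln (real n)) / real n"

end

theory Submission
  imports Defs "HOL-Real_Asymp.Real_Asymp"
begin

lemma det_cnj: "det (map_mat cnj A) = cnj (det (A :: complex mat))"
  unfolding det_def by (auto simp: sign_def)

definition Mt :: "nat \<Rightarrow> real \<Rightarrow> real \<Rightarrow> complex mat" where
  "Mt n \<alpha> t = mat n n (\<lambda>(j,l). of_real (1-t) * (if j = l then 1 else 0) + of_real t * arc_toeplitz n \<alpha> $$ (j,l))"

lemma toep_herm: "j < n \<Longrightarrow> l < n \<Longrightarrow> cnj (arc_toeplitz n \<alpha> $$ (j,l)) = arc_toeplitz n \<alpha> $$ (l,j)"
  unfolding arc_toeplitz_def
  apply (simp add: integral_cnj exp_cnj)
  apply (rule arg_cong[where f="\<lambda>f. integral _ f"])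
  apply (rule ext)
  apply (simp add: algebra_simps)
  done

lemma Mt_herm: "map_mat cnj (Mt n \<alpha> t) = transpose_mat (Mt n \<alpha> t)"
  by (rule eq_matI) (auto simp: Mt_def toep_herm)

lemma det_Mt_real: "Im (det (Mt n \<alpha> t)) = 0"
proof -
  have c: "Mt n \<alpha> t \<in> carrier_mat n n" by (simp add: Mt_def)
  have "cnj (det (Mt n \<alpha> t)) = det (map_mat cnj (Mt n \<alpha> t))" by (rule det_cnj[symmetric])
  also have "\<dots> = det (transpose_mat (Mt n \<alpha> t))" by (simp only: Mt_herm)
  also have "\<dots> = det (Mt n \<alpha> t)" by (rule det_transpose[OF c])
  finally have "cnj (det (Mt n \<alpha> t)) = det (Mt n \<alpha> t)" .
  then show ?thesis by (simp add: complex_eq_iff)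
qed

lemma quad_form:
  fixes v :: "complex vec"
  shows "\<exists>q\<ge>0. (\<Sum>j<n. \<Sum>l<n. cnj (v$j) * arc_toeplitz n \<alpha> $$ (j,l) * v$l) = of_real q"
proof -
  define I where "I = {\<alpha> .. 2 * pi - \<alpha>}"
  define e where "e = (\<lambda>j l \<theta>. exp (\<i> * complex_of_real (real_of_int (int j - int l) * \<theta>)))"
  define S where "S = (\<lambda>\<theta>. \<Sum>l<n. v$l * exp (- \<i> * of_real (real l * \<theta>)))"
  have cont_e: "continuous_on I (e j l)" for j l unfolding e_def by (intro continuous_intros)
  have int_e: "(\<lambda>\<theta>. c * e j l \<theta>) integrable_on I" for j l c
    unfolding I_def by (intro integrable_continuous_interval continuous_intros cont_e[unfolded I_def])
  have pw: "(\<Sum>j<n. \<Sum>l<n. cnj (v$j) * v$l * e j l \<theta>) = of_real ((cmod (S \<theta>))^2)" for \<theta>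
  proof -
    have "of_real ((cmod (S \<theta>))^2) = cnj (S \<theta>) * S \<theta>"
      by (metis complex_norm_square mult.commute)
    also have "\<dots> = (\<Sum>j<n. \<Sum>l<n. cnj (v$j * exp (- \<i> * of_real (real j * \<theta>))) * (v$l * exp (- \<i> * of_real (real l * \<theta>))))"
      unfolding S_def cnj_sum by (simp add: sum_product)
    also have "\<dots> = (\<Sum>j<n. \<Sum>l<n. cnj (v$j) * v$l * e j l \<theta>)"
    proof (intro sum.cong refl)
      fix j l
      have "cnj (exp (- \<i> * of_real (real j * \<theta>))) * exp (- \<i> * of_real (real l * \<theta>)) = e j l \<theta>"
        unfolding e_def exp_cnj exp_add[symmetric] by (simp add: algebra_simps)
      then show "cnj (v$j * exp (- \<i> * of_real (real j * \<theta>))) * (v$l * exp (- \<i> * of_real (real l * \<theta>))) = cnj (v$j) * v$l * e j l \<theta>"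
        by (simp add: algebra_simps)
    qed
    finally show ?thesis by simp
  qed
  have contS: "continuous_on I (\<lambda>\<theta>. (cmod (S \<theta>))^2)" unfolding S_def by (intro continuous_intros)
  have intS: "(\<lambda>\<theta>. (cmod (S \<theta>))^2) integrable_on I"
    unfolding I_def by (intro integrable_continuous_interval contS[unfolded I_def])
  have "(\<Sum>j<n. \<Sum>l<n. cnj (v$j) * arc_toeplitz n \<alpha> $$ (j,l) * v$l)
      = of_real (1/(2*pi)) * (\<Sum>j<n. \<Sum>l<n. integral I (\<lambda>\<theta>. cnj (v$j) * v$l * e j l \<theta>))"
    unfolding sum_distrib_left
    by (intro sum.cong refl) (simp add: arc_toeplitz_def I_def e_def integral_mult_right algebra_simps)
  also have "\<dots> = of_real (1/(2*pi)) * integral I (\<lambda>\<theta>. \<Sum>j<n. \<Sum>l<n. cnj (v$j) * v$l * e j l \<theta>)"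
    by (subst integral_sum) (auto intro!: integrable_sum int_e simp: integral_sum int_e)
  also have "\<dots> = of_real (1/(2*pi)) * of_real (integral I (\<lambda>\<theta>. (cmod (S \<theta>))^2))"
    unfolding pw using has_integral_of_real[OF integrable_integral[OF intS]]
    by (metis integral_unique)
  also have "\<dots> = of_real (1/(2*pi) * integral I (\<lambda>\<theta>. (cmod (S \<theta>))^2))" by simp
  finally have eq: "(\<Sum>j<n. \<Sum>l<n. cnj (v$j) * arc_toeplitz n \<alpha> $$ (j,l) * v$l) = of_real (1/(2*pi) * integral I (\<lambda>\<theta>. (cmod (S \<theta>))^2))" .
  have "0 \<le> integral I (\<lambda>\<theta>. (cmod (S \<theta>))^2)" by (rule integral_nonneg[OF intS]) simp
  then have "0 \<le> 1/(2*pi) * integral I (\<lambda>\<theta>. (cmod (S \<theta>))^2)" by simp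
  with eq show ?thesis by blast
qed


lemma Mt_carrier: "Mt n \<alpha> t \<in> carrier_mat n n" by (simp add: Mt_def)

lemma det_Mt_nz:
  assumes t: "0 \<le> t" "t < 1"
  shows "det (Mt n \<alpha> t) \<noteq> 0"
proof
  assume "det (Mt n \<alpha> t) = 0"
  then obtain v where v: "v \<in> carrier_vec n" "v \<noteq> 0\<^sub>v n" "Mt n \<alpha> t *\<^sub>v v = 0\<^sub>v n"
    using det_0_iff_vec_prod_zero[OF Mt_carrier] by blast
  obtain q where q: "q \<ge> 0" "(\<Sum>j<n. \<Sum>l<n. cnj (v$j) * arc_toeplitz n \<alpha> $$ (j,l) * v$l) = of_real q"
    using quad_form by blast
  have row: "(Mt n \<alpha> t *\<^sub>v v) $ j = (\<Sum>l<n. Mt n \<alpha> t $$ (j,l) * v$l)" if "j < n" for j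
    using that v(1) by (auto simp: Mt_def scalar_prod_def row_def lessThan_atLeast0 intro!: sum.cong)
  have "0 = (\<Sum>j<n. cnj (v$j) * (Mt n \<alpha> t *\<^sub>v v) $ j)"
    using v(3) by simp
  also have "\<dots> = (\<Sum>j<n. \<Sum>l<n. cnj (v$j) * (of_real (1-t) * (if j = l then 1 else 0) * v$l + of_real t * (arc_toeplitz n \<alpha> $$ (j,l) * v$l)))"
    by (intro sum.cong refl) (simp add: row sum_distrib_left, intro sum.cong refl, simp add: Mt_def algebra_simps)
  also have "\<dots> = of_real (1-t) * (\<Sum>j<n. cnj (v$j) * v$j) + of_real t * (\<Sum>j<n. \<Sum>l<n. cnj (v$j) * arc_toeplitz n \<alpha> $$ (j,l) * v$l)"
  proof -
    have inner: "(\<Sum>l<n. cnj (v$j) * (of_real (1-t) * (if j = l then 1 else 0) * v$l)) = of_real (1-t) * (cnj (v$j) * v$j)" if "j < n" for j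
    proof -
      have "(\<Sum>l<n. cnj (v$j) * (of_real (1-t) * (if j = l then 1 else 0) * v$l)) = (\<Sum>l<n. if j = l then of_real (1-t) * (cnj (v$j) * v$l) else 0)"
        by (intro sum.cong) auto
      also have "\<dots> = of_real (1-t) * (cnj (v$j) * v$j)" using that by (simp add: sum.delta)
      finally show ?thesis .
    qed
    have "(\<Sum>j<n. \<Sum>l<n. cnj (v$j) * (of_real (1-t) * (if j = l then 1 else 0) * v$l + of_real t * (arc_toeplitz n \<alpha> $$ (j,l) * v$l)))
       = (\<Sum>j<n. \<Sum>l<n. cnj (v$j) * (of_real (1-t) * (if j = l then 1 else 0) * v$l)) + of_real t * (\<Sum>j<n. \<Sum>l<n. cnj (v$j) * arc_toeplitz n \<alpha> $$ (j,l) * v$l)"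
      by (simp add: sum.distrib sum_distrib_left distrib_left mult.assoc mult.left_commute)
    also have "(\<Sum>j<n. \<Sum>l<n. cnj (v$j) * (of_real (1-t) * (if j = l then 1 else 0) * v$l)) = of_real (1-t) * (\<Sum>j<n. cnj (v$j) * v$j)"
      using inner by (simp add: sum_distrib_left)
    finally show ?thesis .
  qed
  also have "(\<Sum>j<n. cnj (v$j) * v$j) = of_real (\<Sum>j<n. (cmod (v$j))^2)"
    unfolding of_real_sum complex_norm_square by (simp add: mult.commute)
  finally have "0 = complex_of_real ((1-t) * (\<Sum>j<n. (cmod (v$j))^2) + t * q)" using q(2)
    by (simp only: of_real_add of_real_mult)
  then have eq0: "(1-t) * (\<Sum>j<n. (cmod (v$j))^2) + t * q = 0"
    by (metis of_real_eq_0_iff)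
  obtain j where j: "j < n" "v$j \<noteq> 0"
  proof -
    have "\<exists>j<n. v$j \<noteq> 0"
    proof (rule ccontr)
      assume "\<not> (\<exists>j<n. v$j \<noteq> 0)"
      then have "v = 0\<^sub>v n" using v(1) by (intro eq_vecI) auto
      with v(2) show False by simp
    qed
    then show ?thesis using that by blast
  qed
  have "(cmod (v$j))^2 \<le> (\<Sum>j<n. (cmod (v$j))^2)"
    using j by (intro member_le_sum) auto
  moreover have "(cmod (v$j))^2 > 0" using j by simp
  ultimately have "(\<Sum>j<n. (cmod (v$j))^2) > 0" by linarith
  then have "(1-t) * (\<Sum>j<n. (cmod (v$j))^2) > 0" using t by (intro mult_pos_pos) auto
  moreover have "t * q \<ge> 0" using t q(1) by (intro mult_nonneg_nonneg) auto
  ultimately show False using eq0 by linarith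
qed


lemma D_nonneg: "D n \<alpha> \<ge> 0"
proof (rule ccontr)
  assume neg: "\<not> D n \<alpha> \<ge> 0"
  define T where "T = arc_toeplitz n \<alpha>"
  define f where "f = (\<lambda>t. Re (det (Mt n \<alpha> t)))"
  have detf: "det (Mt n \<alpha> t) = (\<Sum>p\<in>{p. p permutes {0..<n}}. signof p *
      (\<Prod>i=0..<n. of_real (1-t) * (if i = p i then 1 else 0) + of_real t * T $$ (i, p i)))" for t
    unfolding det_def'[OF Mt_carrier] T_def
    by (intro sum.cong refl arg_cong[where f="\<lambda>x. signof _ * x"] prod.cong)
       (auto simp: Mt_def permutes_in_image)
  have cont: "continuous_on {0..1} f"
    unfolding f_def detf by (intro continuous_intros)
  have M1: "Mt n \<alpha> 1 = arc_toeplitz n \<alpha>"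
    by (rule eq_matI) (auto simp: Mt_def arc_toeplitz_def)
  have M0: "Mt n \<alpha> 0 = 1\<^sub>m n"
    by (rule eq_matI) (auto simp: Mt_def)
  have f0: "f 0 = 1" unfolding f_def M0 by simp
  have f1: "f 1 < 0" using neg unfolding f_def M1 D_def by simp
  obtain t where t: "0 \<le> t" "t \<le> 1" "f t = 0"
    using IVT2'[of f 1 0 0] f0 f1 cont by auto
  have "t \<noteq> 1" using t f1 by auto
  with t have "det (Mt n \<alpha> t) \<noteq> 0" by (intro det_Mt_nz) auto
  moreover have "Im (det (Mt n \<alpha> t)) = 0" by (rule det_Mt_real)
  ultimately show False using t(3) unfolding f_def by (simp add: complex_eq_iff)
qed

definition Uf :: "real \<Rightarrow> real \<Rightarrow> real \<Rightarrow> real" where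
  "Uf x z s = (1 + 2 * z / s ^ 2) * (s + (4 * x - 5 * ln s) / (4 * s))"
lemma l1: fixes x z :: real shows "((\<lambda>s::real. s^2/2 - (Uf x z s)^2/2 - ln s - 1/4 * ln (Uf x z s)) \<longlongrightarrow> - x - 2*z) at_top"
proof -
  have "((\<lambda>s::real. s^2/2 - (Uf x z s)^2/2 - ln s - 1/4 * ln (Uf x z s)) \<longlongrightarrow> - ((x * 2 + 4 * z) / 2)) at_top"
    unfolding Uf_def by real_asymp
  moreover have e: "- x - 2*z = - ((x * 2 + 4 * z) / 2)" by (simp add: field_simps)
  ultimately show ?thesis by (simp only: e)
qed
lemma l2: "filterlim (Uf x z) at_top at_top" unfolding Uf_def by real_asymp
lemma l3: "((\<lambda>s. (Uf x z s)^4 / exp (s^2)) \<longlongrightarrow> 0) at_top" unfolding Uf_def by real_asymp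
lemma l4: "((\<lambda>s. Uf x z s / exp (s^2/2)) \<longlongrightarrow> 0) at_top" unfolding Uf_def by real_asymp
lemma l5: "filterlim (\<lambda>r::real. sqrt (2 * ln r)) at_top at_top" by real_asymp
lemma l6: "filterlim (\<lambda>s::real. s^2/2 - ln s) at_top at_top" by real_asymp
lemma l7: "((\<lambda>y::real. (ln (cos y) + y^2/2) / y^4) \<longlongrightarrow> -1/12) (at 0)"
  by real_asymp
lemma l8: "((\<lambda>y::real. ln (sin y / y)) \<longlongrightarrow> 0) (at 0)"
  by real_asymp
lemma l9: "((\<lambda>y::real. sin y / y) \<longlongrightarrow> 1) (at 0)"
  by real_asymp
lemma tendsto_ev_trans: "(f \<longlongrightarrow> l) F \<Longrightarrow> eventually (\<lambda>x. f x = g x) F \<Longrightarrow> l = m \<Longrightarrow> (g \<longlongrightarrow> m) F"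
  using tendsto_cong by blast

lemma fl_ev_trans: "filterlim f at_top F \<Longrightarrow> eventually (\<lambda>x. f x = g x) F \<Longrightarrow> filterlim g at_top F"
  using filterlim_cong[OF refl refl] by blast

theorem lemma8:
  fixes c0 s0 x z :: real
  assumes s0_pos: "s0 > 0"
    and DIK: "\<forall>\<epsilon>>0. \<exists>C N. \<forall>n\<ge>N. \<forall>\<alpha>. s0 / real n < \<alpha> \<and> \<alpha> < pi - \<epsilon> \<longrightarrow>
        \<bar>ln (D n \<alpha>) - ((real n)\<^sup>2 * ln (cos (\<alpha> / 2)) - 1/4 * ln (real n * sin (\<alpha> / 2)) + c0)\<bar>
          \<le> C / (real n * sin (\<alpha> / 2))"
  shows "(\<lambda>n. real n * (2 * ln (real n)) powr (-1/2) *
            D n ((1 + z / ln (real n)) * G n x / 2))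
         \<longlonglongrightarrow> exp (c0 - x - 2 * z)"
proof -
  define s where "s = (\<lambda>n::nat. sqrt (2 * ln (real n)))"
  define a where "a = (\<lambda>n::nat. (1 + z / ln (real n)) * G n x / 2)"
  define y where "y = (\<lambda>n. a n / 2)"
  define u where "u = (\<lambda>n. real n * y n)"
  define E where "E = (\<lambda>n. (real n)\<^sup>2 * ln (cos (a n / 2)) - 1/4 * ln (real n * sin (a n / 2)) + c0)"
  define Cf where "Cf = (\<lambda>s::real. s^2/2 - (Uf x z s)^2/2 - ln s - 1/4 * ln (Uf x z s))"
  have ev2: "eventually (\<lambda>n::nat. n \<ge> 2) sequentially" by (rule eventually_ge_at_top)
  have Lpos: "ln (real n) > 0" if "n \<ge> 2" for n using that by (intro ln_gt_zero) auto
  have sq: "s n ^ 2 = 2 * ln (real n)" if "n \<ge> 2" for n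
    using Lpos[OF that] unfolding s_def by simp
  have spos: "s n > 0" if "n \<ge> 2" for n
    using Lpos[OF that] unfolding s_def by simp
  have uU: "u n = Uf x z (s n)" if n2: "n \<ge> 2" for n
  proof -
    have L: "ln (real n) > 0" using Lpos[OF n2] .
    have sp: "s n > 0" using spos[OF n2] .
    have s2: "s n ^ 2 = 2 * ln (real n)" using sq[OF n2] .
    have sq32: "sqrt (32 * ln (real n)) = 4 * s n"
    proof -
      have "32 * ln (real n) = 4^2 * (2 * ln (real n))" by simp
      then have "sqrt (32 * ln (real n)) = sqrt (4^2) * sqrt (2 * ln (real n))"
        by (simp only: real_sqrt_mult)
      then show ?thesis unfolding s_def by simp
    qed
    have ln2: "ln (2 * ln (real n)) = 2 * ln (s n)"
      using sp by (simp add: s2[symmetric] ln_realpow)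
    have zL: "z / ln (real n) = 2 * z / s n ^ 2" using s2 L by simp
    have np: "real n > 0" using n2 by simp
    have sd: "sqrt (2 * ln (real n)) = s n" by (simp add: s_def)
    show ?thesis
      unfolding u_def y_def a_def G_def sq32 ln2 zL Uf_def sd
      using np sp by (simp add: field_simps)
  qed
  have hs: "filterlim s at_top sequentially"
    unfolding s_def by (rule filterlim_compose[OF l5 filterlim_real_sequentially])
  have hC: "((\<lambda>n. Cf (s n)) \<longlongrightarrow> - x - 2 * z) sequentially"
    unfolding Cf_def by (rule filterlim_compose[OF l1 hs])
  have evU: "eventually (\<lambda>n. Uf x z (s n) = u n) sequentially"
    using ev2 by eventually_elim (simp add: uU)
  have hu: "filterlim u at_top sequentially"
    by (rule fl_ev_trans[OF filterlim_compose[OF l2 hs] evU])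
  have expn: "exp (s n ^ 2) = (real n)^2" if "n \<ge> 2" for n
  proof -
    have "exp (s n ^ 2) = exp (ln (real n)) ^ 2" using sq[OF that] exp_double[of "ln (real n)"] by simp
    then show ?thesis using that by simp
  qed
  have expn2: "exp (s n ^ 2 / 2) = real n" if "n \<ge> 2" for n
    using sq[OF that] that by simp
  have hu4: "((\<lambda>n. u n ^ 4 / (real n)^2) \<longlongrightarrow> 0) sequentially"
  proof -
    have "((\<lambda>n. (Uf x z (s n))^4 / exp (s n ^ 2)) \<longlongrightarrow> 0) sequentially"
      by (rule filterlim_compose[OF l3 hs])
    moreover have "eventually (\<lambda>n. (Uf x z (s n))^4 / exp (s n ^ 2) = u n ^ 4 / (real n)^2) sequentially"
      using ev2 by eventually_elim (simp add: uU expn)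
    ultimately show ?thesis by (rule tendsto_ev_trans) simp
  qed
  have hy: "(y \<longlongrightarrow> 0) sequentially"
  proof -
    have "((\<lambda>n. Uf x z (s n) / exp (s n ^ 2 / 2)) \<longlongrightarrow> 0) sequentially"
      by (rule filterlim_compose[OF l4 hs])
    moreover have "eventually (\<lambda>n. Uf x z (s n) / exp (s n ^ 2 / 2) = y n) sequentially"
      using ev2 by eventually_elim (simp add: uU[symmetric] expn2 u_def)
    ultimately show ?thesis by (rule tendsto_ev_trans) simp
  qed
  have evu: "eventually (\<lambda>n. u n > s0) sequentially"
    using hu unfolding filterlim_at_top_dense by blast
  have evypos: "eventually (\<lambda>n. y n > 0) sequentially"
    using evu ev2
  proof eventually_elim
    case (elim n)
    have "0 < real n * y n" using elim s0_pos by (simp add: u_def)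
    moreover have "real n > 0" using elim by simp
    ultimately show ?case by (rule zero_less_mult_pos)
  qed
  have evysmall: "eventually (\<lambda>n. y n < 1/2) sequentially"
    using hy by (rule order_tendstoD(2)) simp
  have yat0: "filterlim y (at 0) sequentially"
    by (rule filterlim_atI[OF hy]) (use evypos in \<open>eventually_elim, simp\<close>)
  have hA: "((\<lambda>n. (real n)^2 * (ln (cos (y n)) + (y n)^2/2)) \<longlongrightarrow> 0) sequentially"
  proof -
    have "((\<lambda>n. (ln (cos (y n)) + (y n)^2/2) / (y n)^4 * (u n ^ 4 / (real n)^2)) \<longlongrightarrow> (-1/12) * 0) sequentially"
      by (intro tendsto_mult filterlim_compose[OF l7 yat0] hu4)
    moreover have "eventually (\<lambda>n. (ln (cos (y n)) + (y n)^2/2) / (y n)^4 * (u n ^ 4 / (real n)^2)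
        = (real n)^2 * (ln (cos (y n)) + (y n)^2/2)) sequentially"
      using evypos ev2 by eventually_elim (simp add: u_def field_simps power_mult_distrib)
    ultimately show ?thesis by (rule tendsto_ev_trans) simp
  qed
  have hB: "((\<lambda>n. ln (sin (y n) / y n)) \<longlongrightarrow> 0) sequentially"
    by (rule filterlim_compose[OF l8 yat0])
  have hsy: "((\<lambda>n. sin (y n) / y n) \<longlongrightarrow> 1) sequentially"
    by (rule filterlim_compose[OF l9 yat0])
  have evsin: "eventually (\<lambda>n. sin (y n) > 0) sequentially"
    using evypos evysmall
  proof eventually_elim
    case (elim n)
    then show ?case using pi_gt3 by (intro sin_gt_zero) auto
  qed
  have hE: "((\<lambda>n. ln (real n) - ln (s n) + E n) \<longlongrightarrow> (- x - 2 * z) + 0 - 0/4 + c0) sequentially"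
  proof -
    have "((\<lambda>n. Cf (s n) + (real n)^2 * (ln (cos (y n)) + (y n)^2/2) - ln (sin (y n) / y n) / 4 + c0)
        \<longlongrightarrow> (- x - 2 * z) + 0 - 0/4 + c0) sequentially"
      by (intro tendsto_intros hC hA hB) simp_all
    moreover have "eventually (\<lambda>n. Cf (s n) + (real n)^2 * (ln (cos (y n)) + (y n)^2/2) - ln (sin (y n) / y n) / 4 + c0
        = ln (real n) - ln (s n) + E n) sequentially"
      using ev2 evypos evsin
    proof eventually_elim
      case (elim n)
      have np: "real n > 0" using elim by simp
      have up: "u n > 0" using elim np by (simp add: u_def)
      have nsin: "real n * sin (y n) = u n * (sin (y n) / y n)" using elim by (simp add: u_def)
      have l1: "ln (real n * sin (y n)) = ln (u n) + ln (sin (y n) / y n)"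
        unfolding nsin using up elim by (intro ln_mult_pos) auto
      have l2: "ln (real n) = s n ^ 2 / 2" using sq[OF elim(1)] by simp
      have a2: "a n / 2 = y n" by (simp add: y_def)
      show ?case
        unfolding E_def Cf_def a2 l1 l2 uU[OF elim(1), symmetric]
        by (simp add: u_def field_simps power_mult_distrib)
    qed
    ultimately show ?thesis by (rule tendsto_ev_trans) simp
  qed
  obtain C N where CN: "\<forall>n\<ge>N. \<forall>\<alpha>. s0 / real n < \<alpha> \<and> \<alpha> < pi - 1 \<longrightarrow>
        \<bar>ln (D n \<alpha>) - ((real n)\<^sup>2 * ln (cos (\<alpha> / 2)) - 1/4 * ln (real n * sin (\<alpha> / 2)) + c0)\<bar>
          \<le> C / (real n * sin (\<alpha> / 2))"
    using spec[OF DIK, of 1] by auto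
  have evbound: "eventually (\<lambda>n. norm (ln (D n (a n)) - E n) \<le> C / (real n * sin (a n / 2))) sequentially"
    using eventually_ge_at_top[of N] ev2 evu evysmall
  proof eventually_elim
    case (elim n)
    have np: "real n > 0" using elim by simp
    have "s0 / real n < a n"
      using elim np s0_pos by (simp add: u_def y_def field_simps)
    moreover have "a n < pi - 1" using elim pi_gt3 by (simp add: y_def)
    ultimately show ?case using CN elim(1) unfolding E_def by auto
  qed
  have herr: "((\<lambda>n. C / (real n * sin (a n / 2))) \<longlongrightarrow> 0) sequentially"
  proof -
    have "filterlim (\<lambda>n. sin (y n) / y n * u n) at_top sequentially"
      by (rule filterlim_tendsto_pos_mult_at_top[OF hsy _ hu]) simp
    then have "((\<lambda>n. C * inverse (sin (y n) / y n * u n)) \<longlongrightarrow> C * 0) sequentially"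
      by (intro tendsto_mult tendsto_const tendsto_inverse_0_at_top)
    moreover have "eventually (\<lambda>n. C * inverse (sin (y n) / y n * u n) = C / (real n * sin (a n / 2))) sequentially"
      using evypos by eventually_elim (simp add: u_def y_def field_simps)
    ultimately show ?thesis by (rule tendsto_ev_trans) simp
  qed
  have hdiff: "((\<lambda>n. ln (D n (a n)) - E n) \<longlongrightarrow> 0) sequentially"
    by (rule Lim_null_comparison[OF evbound herr])
  have hF: "((\<lambda>n. ln (real n) - ln (s n) + ln (D n (a n))) \<longlongrightarrow> c0 - x - 2 * z) sequentially"
  proof -
    have "((\<lambda>n. (ln (real n) - ln (s n) + E n) + (ln (D n (a n)) - E n)) \<longlongrightarrow> ((- x - 2 * z) + 0 - 0/4 + c0) + 0) sequentially"
      by (intro tendsto_add hE hdiff)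
    then show ?thesis by (rule tendsto_ev_trans) (simp_all add: algebra_simps)
  qed
  have hlog: "filterlim (\<lambda>n. ln (real n) - ln (s n)) at_top sequentially"
  proof -
    have "filterlim (\<lambda>n. s n ^ 2 / 2 - ln (s n)) at_top sequentially"
      by (rule filterlim_compose[OF l6 hs])
    moreover have "eventually (\<lambda>n. s n ^ 2 / 2 - ln (s n) = ln (real n) - ln (s n)) sequentially"
      using ev2 by eventually_elim (simp add: sq)
    ultimately show ?thesis by (rule fl_ev_trans)
  qed
  have evDpos: "eventually (\<lambda>n. D n (a n) > 0) sequentially"
  proof -
    have e1: "eventually (\<lambda>n. ln (real n) - ln (s n) + ln (D n (a n)) < c0 - x - 2 * z + 1) sequentially"
      using hF by (rule order_tendstoD(2)) simp
    have e2: "eventually (\<lambda>n. ln (real n) - ln (s n) > c0 - x - 2 * z + 1) sequentially"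
      using hlog unfolding filterlim_at_top_dense by blast
    show ?thesis using e1 e2
    proof eventually_elim
      case (elim n)
      then have "ln (D n (a n)) \<noteq> 0" by linarith
      then have "D n (a n) \<noteq> 0" by auto
      with D_nonneg[of n "a n"] show ?case by linarith
    qed
  qed
  have "((\<lambda>n. exp (ln (real n) - ln (s n) + ln (D n (a n)))) \<longlongrightarrow> exp (c0 - x - 2 * z)) sequentially"
    by (intro tendsto_exp hF)
  moreover have "eventually (\<lambda>n. exp (ln (real n) - ln (s n) + ln (D n (a n))) =
      real n * (2 * ln (real n)) powr (-1/2) * D n ((1 + z / ln (real n)) * G n x / 2)) sequentially"
    using ev2 evDpos
  proof eventually_elim
    case (elim n)
    have L: "2 * ln (real n) > 0" using Lpos[OF elim(1)] by simp
    have pw: "(2 * ln (real n)) powr (-1/2) = inverse (s n)"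
    proof -
      have "(2 * ln (real n)) powr (-1/2) = (2 * ln (real n)) powr (- (1/2))" by simp
      also have "\<dots> = inverse (sqrt (2 * ln (real n)))"
        using L by (simp add: powr_minus powr_half_sqrt)
      finally show ?thesis by (simp add: s_def)
    qed
    have "exp (ln (real n) - ln (s n) + ln (D n (a n))) = real n / s n * D n (a n)"
      using elim spos[OF elim(1)] by (simp add: exp_add exp_diff)
    then show ?case unfolding pw a_def by (simp add: field_simps)
  qed
  ultimately show ?thesis by (rule tendsto_ev_trans) simp
qed

end
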